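(* For all terms $s,t$ over $\Sigma_{SCL}(A)$ (possibly containing variables), if $\mathrm{EqFSCL}\vdash s=t$ then $\mathbb M_{se}\models s=t$, i.e. $s$ and $t$ have equal interpretations in $\mathbb M_{se}$ under every assignment of elements of the domain of $\mathbb M_{se}$ to the variables.
   Context: Let $A$ be a nonempty set of atoms. The signature $\Sigma_{SCL}(A)$ consists of the constants $\mathsf T,\mathsf F$, each atom $a\in A$ as a constant, unary negation $\neg$, and two binary connectives written $x\land^\circ y$ (left-sequential, short-circuit conjunction) and $x\lor^\circ y$ (left-sequential, short-circuit disjunction). $\mathcal S_A$ denotes the set of closed terms over $\Sigma_{SCL}(A)$. EqFSCL is the following set of equations in variables $x,y,z$: (F1) $\mathsf F=\neg\mathsf T$; (F2) $x\lor^\circ y=\neg(\neg x\land^\circ\neg y)$; (F3) $\neg\neg x=x$; (F4) $\mathsf T\land^\circ x=x$; (F5) $x\lor^\circ\mathsf F=x$; (F6) $\mathsf F\land^\circ x=\mathsf F$; (F7) $(x\land^\circ y)\land^\circ z=x\land^\circ(y\land^\circ z)$; (F8) $\neg x\land^\circ\mathsf F=x\land^\circ\mathsf F$; (F9) $(x\land^\circ\mathsf F)\lor^\circ y=(x\lor^\circ\mathsf T)\land^\circ y$; (F10) $(x\land^\circ y)\lor^\circ(z\land^\circ\mathsf F)=(x\lor^\circ(z\land^\circ\mathsf F))\land^\circ(y\lor^\circ(z\land^\circ\mathsf F))$. $E\vdash s=t$ means $s=t$ is derivable from the equations $E$ in equational logic (reflexivity, symmetry, transitivity, congruence, substitution).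 Evaluation trees: the set $\mathcal T_A$ is defined inductively by $\mathsf T,\mathsf F\in\mathcal T_A$ and $(X\unlhd a\unrhd Y)\in\mathcal T_A$ for $X,Y\in\mathcal T_A$, $a\in A$ (a binary tree with root labelled $a$, left branch $X$, right branch $Y$, leaves labelled $\mathsf T$ or $\mathsf F$). Leaf replacement is defined by $\mathsf T[\mathsf T\mapsto Y,\mathsf F\mapsto Z]=Y$, $\mathsf F[\mathsf T\mapsto Y,\mathsf F\mapsto Z]=Z$, $(X_1\unlhd a\unrhd X_2)[\mathsf T\mapsto Y,\mathsf F\mapsto Z]=X_1[\mathsf T\mapsto Y,\mathsf F\mapsto Z]\unlhd a\unrhd X_2[\mathsf T\mapsto Y,\mathsf F\mapsto Z]$; an omitted replacement is the identity (e.g. $X[\mathsf T\mapsto Y]=X[\mathsf T\mapsto Y,\mathsf F\mapsto\mathsf F]$). The short-circuit evaluation function $se:\mathcal S_A\to\mathcal T_A$ is: $se(\mathsf T)=\mathsf T$, $se(\mathsf F)=\mathsf F$, $se(a)=\mathsf T\unlhd a\unrhd\mathsf F$, $se(\neg P)=se(P)[\mathsf T\mapsto\mathsf F,\mathsf F\mapsto\mathsf T]$, $se(P\land^\circ Q)=se(P)[\mathsf T\mapsto se(Q)]$, $se(P\lor^\circ Q)=se(P)[\mathsf F\mapsto se(Q)]$. The model $\mathbb M_{se}$ is the $\Sigma_{SCL}(A)$-algebra with domain $\{se(P)\mid P\in\mathcal S_A\}$, interpreting $\mathsf T,\mathsf F,a$ as $\mathsf T$, $\mathsf F$, $\mathsf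 T\unlhd a\unrhd\mathsf F$, and $\neg X=X[\mathsf T\mapsto\mathsf F,\mathsf F\mapsto\mathsf T]$, $X\land^\circ Y=X[\mathsf T\mapsto Y]$, $X\lor^\circ Y=X[\mathsf F\mapsto Y]$. (For closed $P$, the interpretation of $P$ in $\mathbb M_{se}$ is $se(P)$.) *)

theory Defs
  imports Main
begin

datatype ('a, 'v) scl_term =
    Var 'v
  | Tc
  | Fc
  | Atom 'a
  | Neg "('a, 'v) scl_term"
  | LAnd "('a, 'v) scl_term" "('a, 'v) scl_term"
  | LOr "('a, 'v) scl_term" "('a, 'v) scl_term"

datatype 'a cterm =
    CT
  | CF
  | CAtom 'a
  | CNeg "'a cterm"
  | CAnd "'a cterm" "'a cterm"
  | COr "'a cterm" "'a cterm"

fun subst :: "('v \<Rightarrow> ('a, 'w) scl_term) \<Rightarrow> ('a, 'v) scl_term \<Rightarrow> ('a, 'w) scl_term" where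
  "subst \<sigma> (Var x) = \<sigma> x"
| "subst \<sigma> Tc = Tc"
| "subst \<sigma> Fc = Fc"
| "subst \<sigma> (Atom a) = Atom a"
| "subst \<sigma> (Neg p) = Neg (subst \<sigma> p)"
| "subst \<sigma> (LAnd p q) = LAnd (subst \<sigma> p) (subst \<sigma> q)"
| "subst \<sigma> (LOr p q) = LOr (subst \<sigma> p) (subst \<sigma> q)"

definition EqFSCL :: "(('a, nat) scl_term \<times> ('a, nat) scl_term) set" where
  "EqFSCL = (let x = Var 0; y = Var 1; z = Var 2 in
    { (Fc, Neg Tc),
      (LOr x y, Neg (LAnd (Neg x) (Neg y))),
      (Neg (Neg x), x),
      (LAnd Tc x, x),
      (LOr x Fc, x),
      (LAnd Fc x, Fc),
      (LAnd (LAnd x y) z, LAnd x (LAnd y z)),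
      (LAnd (Neg x) Fc, LAnd x Fc),
      (LOr (LAnd x Fc) y, LAnd (LOr x Tc) y),
      (LOr (LAnd x y) (LAnd z Fc),
         LAnd (LOr x (LAnd z Fc)) (LOr y (LAnd z Fc))) })"

inductive derivable :: "(('a, nat) scl_term \<times> ('a, nat) scl_term) set
    \<Rightarrow> ('a, 'v) scl_term \<Rightarrow> ('a, 'v) scl_term \<Rightarrow> bool" for E where
  ax: "(l, r) \<in> E \<Longrightarrow> derivable E (subst \<sigma> l) (subst \<sigma> r)"
| refl: "derivable E s s"
| sym: "derivable E s t \<Longrightarrow> derivable E t s"
| trans: "derivable E s t \<Longrightarrow> derivable E t u \<Longrightarrow> derivable E s u"
| cong_neg: "derivable E s t \<Longrightarrow> derivable E (Neg s) (Neg t)"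
| cong_and: "derivable E s1 t1 \<Longrightarrow> derivable E s2 t2 \<Longrightarrow> derivable E (LAnd s1 s2) (LAnd t1 t2)"
| cong_or: "derivable E s1 t1 \<Longrightarrow> derivable E s2 t2 \<Longrightarrow> derivable E (LOr s1 s2) (LOr t1 t2)"
| substitution: "derivable E s t \<Longrightarrow> derivable E (subst \<tau> s) (subst \<tau> t)"

datatype 'a etree = TT | FF | Node "'a etree" 'a "'a etree"

fun repl :: "'a etree \<Rightarrow> 'a etree \<Rightarrow> 'a etree \<Rightarrow> 'a etree" where
  "repl TT Y Z = Y"
| "repl FF Y Z = Z"
| "repl (Node X1 a X2) Y Z = Node (repl X1 Y Z) a (repl X2 Y Z)"

fun se :: "'a cterm \<Rightarrow> 'a etree" where
  "se CT = TT"
| "se CF = FF"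
| "se (CAtom a) = Node TT a FF"
| "se (CNeg P) = repl (se P) FF TT"
| "se (CAnd P Q) = repl (se P) (se Q) FF"
| "se (COr P Q) = repl (se P) TT (se Q)"

definition Mse_dom :: "'a etree set" where
  "Mse_dom = range se"

fun interp :: "('v \<Rightarrow> 'a etree) \<Rightarrow> ('a, 'v) scl_term \<Rightarrow> 'a etree" where
  "interp \<rho> (Var x) = \<rho> x"
| "interp \<rho> Tc = TT"
| "interp \<rho> Fc = FF"
| "interp \<rho> (Atom a) = Node TT a FF"
| "interp \<rho> (Neg p) = repl (interp \<rho> p) FF TT"
| "interp \<rho> (LAnd p q) = repl (interp \<rho> p) (interp \<rho> q) FF"
| "interp \<rho> (LOr p q) = repl (interp \<rho> p) TT (interp \<rho> q)"

definition Mse_models :: "('a, 'v) scl_term \<Rightarrow> ('a, 'v) scl_term \<Rightarrow> bool" where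
  "Mse_models s t \<longleftrightarrow> (\<forall>\<rho>. (\<forall>x. \<rho> x \<in> Mse_dom) \<longrightarrow> interp \<rho> s = interp \<rho> t)"

end

theory Submission
  imports Defs
begin

lemma repl_repl: "repl (repl X A B) C D = repl X (repl A C D) (repl B C D)"
  by (induction X) auto

lemma repl_id: "repl X TT FF = X"
  by (induction X) auto

lemma repl_FF: "repl (repl Z FF FF) A FF = repl Z FF FF"
  by (induction Z) auto

lemma interp_subst: "interp \<rho> (subst \<sigma> t) = interp (\<lambda>x. interp \<rho> (\<sigma> x)) t"
  by (induction t) auto

lemma ax_sound: "(l, r) \<in> EqFSCL \<Longrightarrow> interp \<rho> l = interp \<rho> r"
  unfolding EqFSCL_def Let_def
  by (auto simp: repl_repl repl_id repl_FF)

lemma sound: "derivable E s t \<Longrightarrow> E = EqFSCL \<Longrightarrow> interp \<rho> s = interp \<rho> t"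
proof (induction arbitrary: \<rho> rule: derivable.induct)
  case (ax l r \<sigma>)
  then show ?case by (simp add: interp_subst ax_sound)
next
  case (substitution s t \<tau>)
  then show ?case by (simp add: interp_subst)
qed auto

theorem theorem2p3:
  fixes s t :: "('a, 'v) scl_term"
  assumes "derivable EqFSCL s t"
  shows "Mse_models s t"
  using sound[OF assms HOL.refl] unfolding Mse_models_def by blast

end
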